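(* Let $G$ be a locally compact group, $O$ a neighborhood of the unit, $K\subseteq G$ compact, and $F\subseteq G$ a finite set with $K\subseteq FO$ and $|F|=(K:O)$. Then for every $M\subseteq K$, $|MO^{-1}\cap F|\geq(M:O)$.
   Context: For $X\subseteq G$ and a neighborhood $O$ of the unit, $(X:O)$ denotes the minimal $n$ such that there is a set $F'\subseteq G$ with $|F'|=n$ and $X\subseteq F'O$, where $F'O=\{fo: f\in F', o\in O\}$. $MO^{-1}=\{mo^{-1}: m\in M, o\in O\}$. *)

theory Defs
  imports "HOL-Algebra.Coset" "HOL-Analysis.Analysis"
begin

definition topological_group :: "('a, 'b) monoid_scheme \<Rightarrow> 'a topology \<Rightarrow> bool" where
  "topological_group G T \<longleftrightarrow> group G \<and> topspace T = carrier G \<and>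
     continuous_map (prod_topology T T) T (\<lambda>(x, y). x \<otimes>\<^bsub>G\<^esub> y) \<and>
     continuous_map T T (\<lambda>x. inv\<^bsub>G\<^esub> x)"

definition locally_compact_group :: "('a, 'b) monoid_scheme \<Rightarrow> 'a topology \<Rightarrow> bool" where
  "locally_compact_group G T \<longleftrightarrow> topological_group G T \<and> Hausdorff_space T \<and>
     locally_compact_space T"

definition unit_nbhd :: "('a, 'b) monoid_scheme \<Rightarrow> 'a topology \<Rightarrow> 'a set \<Rightarrow> bool" where
  "unit_nbhd G T V \<longleftrightarrow> V \<subseteq> carrier G \<and> (\<exists>U. openin T U \<and> \<one>\<^bsub>G\<^esub> \<in> U \<and> U \<subseteq> V)"

definition cover_num :: "('a, 'b) monoid_scheme \<Rightarrow> 'a set \<Rightarrow> 'a set \<Rightarrow> nat" where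
  "cover_num G X V = (LEAST n. \<exists>F'. F' \<subseteq> carrier G \<and> finite F' \<and> card F' = n \<and>
                                  X \<subseteq> F' <#>\<^bsub>G\<^esub> V)"

definition mult_inv_set :: "('a, 'b) monoid_scheme \<Rightarrow> 'a set \<Rightarrow> 'a set \<Rightarrow> 'a set" where
  "mult_inv_set G M V = {m \<otimes>\<^bsub>G\<^esub> inv\<^bsub>G\<^esub> o' | m o'. m \<in> M \<and> o' \<in> V}"

end

theory Submission
  imports Defs
begin

theorem proposition7:
  fixes G :: "('a, 'b) monoid_scheme" and T :: "'a topology"
    and V K F :: "'a set"
  assumes "locally_compact_group G T"
    and "unit_nbhd G T V"
    and "compactin T K"
    and "F \<subseteq> carrier G" and "finite F"
    and "K \<subseteq> F <#>\<^bsub>G\<^esub> V"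
    and "card F = cover_num G K V"
  shows "\<forall>M. M \<subseteq> K \<longrightarrow> card (mult_inv_set G M V \<inter> F) \<ge> cover_num G M V"
proof (intro allI impI)
  fix M assume MK: "M \<subseteq> K"
  have grp: "group G" using assms(1) unfolding locally_compact_group_def topological_group_def by blast
  have Vc: "V \<subseteq> carrier G" using assms(2) unfolding unit_nbhd_def by blast
  let ?F = "mult_inv_set G M V \<inter> F"
  have cov: "M \<subseteq> ?F <#>\<^bsub>G\<^esub> V"
  proof
    fix m assume m: "m \<in> M"
    then have "m \<in> F <#>\<^bsub>G\<^esub> V" using MK assms(6) by blast
    then obtain f v where f: "f \<in> F" and v: "v \<in> V" and mfv: "m = f \<otimes>\<^bsub>G\<^esub> v"
      unfolding set_mult_def by blast
    have fc: "f \<in> carrier G" using f assms(4) by blast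
    have vc: "v \<in> carrier G" using v Vc by blast
    have "m \<otimes>\<^bsub>G\<^esub> inv\<^bsub>G\<^esub> v = f"
      using mfv fc vc grp by (simp add: group.inv_solve_right monoid.m_assoc group.is_monoid group.r_inv)
    then have "f \<in> mult_inv_set G M V" unfolding mult_inv_set_def using m v by blast
    then have "f \<in> ?F" using f by blast
    then show "m \<in> ?F <#>\<^bsub>G\<^esub> V" unfolding set_mult_def using v mfv by blast
  qed
  have "?F \<subseteq> carrier G" "finite ?F" using assms(4,5) by auto
  then show "cover_num G M V \<le> card ?F"
    unfolding cover_num_def using cov by (intro Least_le) blast
qed

end
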